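(* $D(19,\{3,4\})\ge 33$; equivalently, every $\{K_3,K_4\}$-decomposition of $K_{19}$ has $\alpha\ge 9$.
   Context: A $\{K_3,K_4\}$-decomposition of $K_v$ is a collection of subgraphs, each isomorphic to $K_3$ or $K_4$, such that every edge of $K_v$ lies in exactly one of them. $\alpha$ and $\beta$ denote the numbers of copies of $K_3$ and $K_4$ in the decomposition (so $3\alpha+6\beta=\binom{v}{2}$). $D(v,\{3,4\})$ is the minimum of $\alpha+\beta$ over all such decompositions of $K_v$. *)

theory Defs
  imports Main
begin

text \<open>A {K3,K4}-decomposition of the complete graph on vertex set V: a collection B of
  vertex subsets (the vertex sets of the K3 / K4 copies), each of size 3 or 4 and contained
  in V, such that every edge {x,y} (x \<noteq> y in V) lies in exactly one block.\<close>
definition K34_decomposition :: "'a set \<Rightarrow> 'a set set \<Rightarrow> bool" where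
  "K34_decomposition V B \<longleftrightarrow>
     (\<forall>b\<in>B. b \<subseteq> V \<and> (card b = 3 \<or> card b = 4)) \<and>
     (\<forall>x\<in>V. \<forall>y\<in>V. x \<noteq> y \<longrightarrow> (\<exists>!b. b \<in> B \<and> x \<in> b \<and> y \<in> b))"

definition num_K3 :: "'a set set \<Rightarrow> nat" where
  "num_K3 B = card {b\<in>B. card b = 3}"

definition num_K4 :: "'a set set \<Rightarrow> nat" where
  "num_K4 B = card {b\<in>B. card b = 4}"

end

theory Submission
  imports Defs
begin

lemma dec_uniq:
  assumes "K34_decomposition V B" "b \<in> B" "b' \<in> B" "x \<in> b" "x \<in> b'" "y \<in> b" "y \<in> b'" "x \<noteq> y"
  shows "b = b'"
proof -
  have "b \<subseteq> V" using assms(1,2) unfolding K34_decomposition_def by blast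
  hence "x \<in> V" "y \<in> V" using assms by auto
  then have "\<exists>!b. b \<in> B \<and> x \<in> b \<and> y \<in> b" using assms(1,8) unfolding K34_decomposition_def by blast
  thus ?thesis using assms by blast
qed

lemma dec_finB:
  assumes "K34_decomposition V B" "finite V"
  shows "finite B"
proof -
  have "B \<subseteq> Pow V" using assms(1) unfolding K34_decomposition_def by blast
  thus ?thesis using assms(2) finite_subset by (metis finite_Pow_iff)
qed

lemma dec_card:
  assumes "K34_decomposition V B" "b \<in> B"
  shows "b \<subseteq> V" "card b = 3 \<or> card b = 4"
  using assms unfolding K34_decomposition_def by auto

lemma union_card:
  assumes "K34_decomposition V B" "finite V" "C \<subseteq> {b\<in>B. x \<in> b}"
  shows "card (\<Union>b\<in>C. b - {x}) = (\<Sum>b\<in>C. card b - 1)"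
proof -
  have fB: "finite B" using dec_finB assms by blast
  have "finite {b\<in>B. x \<in> b}" using fB by simp
  hence fC: "finite C" using assms(3) by (rule finite_subset[rotated])
  have "card (\<Union>b\<in>C. b - {x}) = (\<Sum>b\<in>C. card (b - {x}))"
  proof (rule card_UN_disjoint[OF fC])
    show "\<forall>i\<in>C. finite (i - {x})"
    proof
      fix i assume "i \<in> C"
      hence "i \<subseteq> V" using assms(3) dec_card(1)[OF assms(1)] by blast
      thus "finite (i - {x})" using assms(2) by (simp add: finite_subset)
    qed
    show "\<forall>i\<in>C. \<forall>j\<in>C. i \<noteq> j \<longrightarrow> (i - {x}) \<inter> (j - {x}) = {}"
    proof (intro ballI impI)
      fix i j assume ij: "i \<in> C" "j \<in> C" "i \<noteq> j"
      show "(i - {x}) \<inter> (j - {x}) = {}"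
      proof (rule ccontr)
        assume "(i - {x}) \<inter> (j - {x}) \<noteq> {}"
        then obtain y where y: "y \<in> i" "y \<in> j" "y \<noteq> x" by blast
        have "i \<in> B" "j \<in> B" "x \<in> i" "x \<in> j" using ij assms(3) by auto
        hence "i = j" using dec_uniq[OF assms(1)] y by metis
        thus False using ij by simp
      qed
    qed
  qed
  also have "\<dots> = (\<Sum>b\<in>C. card b - 1)"
  proof (rule sum.cong)
    fix b assume "b \<in> C"
    hence "x \<in> b" "b \<subseteq> V" using assms(3) dec_card(1)[OF assms(1)] by auto
    moreover have "finite b" using \<open>b \<subseteq> V\<close> assms(2) by (simp add: finite_subset)
    ultimately show "card (b - {x}) = card b - 1" by simp
  qed simp
  finally show ?thesis .
qed

lemma local_deg:
  assumes "K34_decomposition V B" "finite V" "x \<in> V"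
  shows "(\<Sum>b\<in>{b\<in>B. x \<in> b}. card b - 1) = card V - 1"
proof -
  have "V - {x} = (\<Union>b\<in>{b\<in>B. x \<in> b}. b - {x})"
  proof
    show "V - {x} \<subseteq> (\<Union>b\<in>{b\<in>B. x \<in> b}. b - {x})"
    proof
      fix y assume "y \<in> V - {x}"
      then obtain b where "b \<in> B" "x \<in> b" "y \<in> b" using assms unfolding K34_decomposition_def by blast
      thus "y \<in> (\<Union>b\<in>{b\<in>B. x \<in> b}. b - {x})" using \<open>y \<in> V - {x}\<close> by blast
    qed
    show "(\<Union>b\<in>{b\<in>B. x \<in> b}. b - {x}) \<subseteq> V - {x}" using assms(1) dec_card by blast
  qed
  hence "card (V - {x}) = (\<Sum>b\<in>{b\<in>B. x \<in> b}. card b - 1)"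
    using union_card[OF assms(1,2), of "{b\<in>B. x \<in> b}" x] by simp
  thus ?thesis using assms by simp
qed

lemma swap_count:
  assumes "K34_decomposition V B" "finite V"
  shows "(\<Sum>x\<in>V. \<Sum>b\<in>{b\<in>B. x \<in> b}. f b) = (\<Sum>b\<in>B. card b * f b)"
proof -
  have fB: "finite B" using dec_finB assms by blast
  have "(\<Sum>x\<in>V. \<Sum>b\<in>{b\<in>B. x \<in> b}. f b) = (\<Sum>b\<in>B. \<Sum>x\<in>{x\<in>V. x \<in> b}. f b)"
    by (rule sum.swap_restrict[OF assms(2) fB])
  also have "\<dots> = (\<Sum>b\<in>B. card b * f b)"
  proof (rule sum.cong)
    fix b assume "b \<in> B"
    hence "{x\<in>V. x \<in> b} = b" using dec_card assms by blast
    thus "(\<Sum>x\<in>{x\<in>V. x \<in> b}. f b) = card b * f b" by simp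
  qed simp
  finally show ?thesis .
qed

lemma sum_split34:
  assumes "finite A" "\<forall>b\<in>A. card b = 3 \<or> card b = 4"
  shows "(\<Sum>b\<in>A. g (card b)) = g 3 * card {b\<in>A. card b = 3} + g 4 * card {b\<in>A. card b = 4}"
proof -
  have "(\<Sum>b\<in>A. g (card b)) = (\<Sum>b\<in>A. if card b = 3 then g 3 else g 4)"
    by (rule sum.cong) (use assms in auto)
  also have "\<dots> = sum (\<lambda>_. g 3) (A \<inter> {b. card b = 3}) + sum (\<lambda>_. g 4) (A \<inter> - {b. card b = 3})"
    by (rule sum.If_cases[OF assms(1)])
  also have "A \<inter> {b. card b = 3} = {b\<in>A. card b = 3}" by auto
  also have "A \<inter> - {b. card b = 3} = {b\<in>A. card b = 4}" using assms by auto
  finally show ?thesis by simp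
qed

theorem mainTheorem19:
  fixes B :: "nat set set"
  assumes "K34_decomposition {0..<19} B"
  shows "num_K3 B + num_K4 B \<ge> 33 \<and> num_K3 B \<ge> 9"
proof -
  define V :: "nat set" where "V = {0..<19}"
  have dec: "K34_decomposition V B" using assms V_def by simp
  have fV: "finite V" and cV: "card V = 19" by (auto simp: V_def)
  have fB: "finite B" using dec_finB[OF dec fV] .
  have bc: "\<forall>b\<in>B. card b = 3 \<or> card b = 4" using dec_card(2)[OF dec] by blast
  define al where "al = num_K3 B"
  define be where "be = num_K4 B"
  define tri where "tri x = {b\<in>B. x \<in> b \<and> card b = 3}" for x
  define qua where "qua x = {b\<in>B. x \<in> b \<and> card b = 4}" for x
  define s where "s x = card (tri x)" for x
  define r where "r x = card (qua x)" for x
  have loc: "2 * s x + 3 * r x = 18" if "x \<in> V" for x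
  proof -
    have "(\<Sum>b\<in>{b\<in>B. x \<in> b}. card b - 1) = 18" using local_deg[OF dec fV that] cV by simp
    moreover have "(\<Sum>b\<in>{b\<in>B. x \<in> b}. card b - 1) =
       (3 - 1) * card {b\<in>{b\<in>B. x \<in> b}. card b = 3} + (4 - 1) * card {b\<in>{b\<in>B. x \<in> b}. card b = 4}"
      by (rule sum_split34[where g = "\<lambda>n. n - 1"]) (use fB bc in auto)
    moreover have "{b\<in>{b\<in>B. x \<in> b}. card b = 3} = tri x" "{b\<in>{b\<in>B. x \<in> b}. card b = 4} = qua x"
      by (auto simp: tri_def qua_def)
    ultimately show ?thesis by (simp add: s_def r_def)
  qed
  have glob: "6 * al + 12 * be = 342"
  proof -
    have "(\<Sum>x\<in>V. \<Sum>b\<in>{b\<in>B. x \<in> b}. card b - 1) = (\<Sum>x\<in>V. 18)"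
      by (rule sum.cong) (use local_deg[OF dec fV] cV in auto)
    also have "\<dots> = 342" using cV by simp
    finally have "(\<Sum>b\<in>B. card b * (card b - 1)) = 342" using swap_count[OF dec fV] by simp
    moreover have "(\<Sum>b\<in>B. card b * (card b - 1)) = (3 * (3 - 1)) * al + (4 * (4 - 1)) * be"
      using sum_split34[OF fB bc, where g = "\<lambda>n. n * (n - 1)"] by (simp add: al_def be_def num_K3_def num_K4_def)
    ultimately show ?thesis by simp
  qed
  have sumS: "(\<Sum>x\<in>V. s x) = 3 * al"
  proof -
    have "(\<Sum>x\<in>V. s x) = (\<Sum>x\<in>V. \<Sum>b\<in>{b\<in>B. x \<in> b}. (if card b = 3 then 1 else 0))"
    proof (rule sum.cong)
      fix x assume "x \<in> V"
      have "finite {b\<in>B. x \<in> b}" using fB by simp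
      hence "(\<Sum>b\<in>{b\<in>B. x \<in> b}. (if card b = 3 then 1 else 0)) = card ({b\<in>B. x \<in> b} \<inter> {b. card b = 3})"
        by (simp add: sum.If_cases)
      also have "{b\<in>B. x \<in> b} \<inter> {b. card b = 3} = tri x" by (auto simp: tri_def)
      finally show "s x = (\<Sum>b\<in>{b\<in>B. x \<in> b}. (if card b = 3 then 1 else 0))" by (simp add: s_def)
    qed simp
    also have "\<dots> = (\<Sum>b\<in>B. card b * (if card b = 3 then 1 else 0))" by (rule swap_count[OF dec fV])
    also have "\<dots> = 3 * al"
      using sum_split34[OF fB bc, where g = "\<lambda>n. n * (if n = 3 then 1 else 0)"] by (simp add: al_def num_K3_def)
    finally show ?thesis .
  qed
  have odd: "odd al" using glob by presburger
  show ?thesis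
  proof (cases "al \<ge> 9")
    case True
    then show ?thesis using glob al_def be_def by simp
  next
    case False
    define T where "T = {x\<in>V. s x > 0}"
    have fT: "finite T" using fV T_def by simp
    have s3: "s x \<ge> 3" if "x \<in> T" for x
    proof -
      have "2 * s x + 3 * r x = 18" using loc that T_def by blast
      moreover have "s x > 0" using that T_def by simp
      ultimately show ?thesis by presburger
    qed
    define N where "N x = (\<Union>b\<in>tri x. b - {x})" for x
    have cN: "card (N x) = 2 * s x" if "x \<in> V" for x
    proof -
      have "card (N x) = (\<Sum>b\<in>tri x. card b - 1)"
        unfolding N_def by (rule union_card[OF dec fV]) (auto simp: tri_def)
      also have "\<dots> = (\<Sum>b\<in>tri x. 2)" by (rule sum.cong) (auto simp: tri_def)
      finally show ?thesis by (simp add: s_def)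
    qed
    have NT: "N x \<subseteq> T - {x}" for x
    proof
      fix y assume "y \<in> N x"
      then obtain b where b: "b \<in> tri x" "y \<in> b" "y \<noteq> x" unfolding N_def by blast
      hence "b \<in> tri y" by (auto simp: tri_def)
      moreover have "finite (tri y)" using fB by (simp add: tri_def)
      ultimately have "s y > 0" unfolding s_def using card_gt_0_iff by blast
      moreover have "y \<in> V" using b dec_card(1)[OF dec] by (auto simp: tri_def)
      ultimately show "y \<in> T - {x}" using b T_def by auto
    qed
    have cNT: "2 * s x \<le> card T - 1" if "x \<in> T" for x
    proof -
      have "card (N x) \<le> card (T - {x})" using NT fT by (simp add: card_mono)
      thus ?thesis using cN[of x] that T_def by simp
    qed
    have "al > 0" using odd by (cases al) auto
    then have "{b\<in>B. card b = 3} \<noteq> {}" unfolding al_def num_K3_def by (metis card.empty less_irrefl)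
    then obtain b where b: "b \<in> B" "card b = 3" by blast
    then obtain x where "x \<in> b" by (metis card.empty empty_iff equals0I zero_neq_numeral)
    then have "b \<in> tri x" using b by (simp add: tri_def)
    moreover have "finite (tri x)" using fB by (simp add: tri_def)
    ultimately have "s x > 0" unfolding s_def using card_gt_0_iff by blast
    moreover have xV: "x \<in> V" using b \<open>x \<in> b\<close> dec_card(1)[OF dec] by auto
    ultimately have xT: "x \<in> T" using T_def by simp
    have T7: "card T \<ge> 7" using cNT[OF xT] s3[OF xT] by simp
    have sumT: "(\<Sum>x\<in>T. s x) = 3 * al"
    proof -
      have "(\<Sum>x\<in>T. s x) = (\<Sum>x\<in>V. s x)"
        by (rule sum.mono_neutral_left) (auto simp: T_def fV)
      thus ?thesis using sumS by simp
    qed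
    have "3 * card T \<le> (\<Sum>x\<in>T. s x)" using sum_mono[of T "\<lambda>_. 3" s] s3 by simp
    hence "al \<ge> 7" using sumT T7 by simp
    hence al7: "al = 7" using False odd by presburger
    have cT: "card T = 7" using \<open>3 * card T \<le> (\<Sum>x\<in>T. s x)\<close> sumT al7 T7 by simp
    have sx3: "s x = 3" if "x \<in> T" for x
    proof (rule ccontr)
      assume "s x \<noteq> 3"
      hence "s x > 3" using s3 that by force
      hence "(\<Sum>x\<in>T. 3) < (\<Sum>x\<in>T. s x)"
        using sum_strict_mono_ex1[OF fT, of "\<lambda>_. 3" s] s3 that by blast
      thus False using sumT al7 cT by simp
    qed
    have pairT: "\<exists>b\<in>B. card b = 3 \<and> x \<in> b \<and> y \<in> b" if "x \<in> T" "y \<in> T" "x \<noteq> y" for x y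
    proof -
      have "card (N x) = card (T - {x})" using cN[of x] sx3[OF that(1)] cT that T_def by simp
      hence "N x = T - {x}" using NT fT by (simp add: card_subset_eq)
      hence "y \<in> N x" using that by simp
      thus ?thesis unfolding N_def tri_def by blast
    qed
    have r4: "card (qua x) = 4" if "x \<in> T" for x
      using loc[of x] sx3[OF that] that T_def r_def by simp
    have "card (\<Union>x\<in>T. qua x) = (\<Sum>x\<in>T. card (qua x))"
    proof (rule card_UN_disjoint[OF fT])
      show "\<forall>i\<in>T. finite (qua i)" using fB by (simp add: qua_def)
      show "\<forall>i\<in>T. \<forall>j\<in>T. i \<noteq> j \<longrightarrow> qua i \<inter> qua j = {}"
      proof (intro ballI impI)
        fix i j assume ij: "i \<in> T" "j \<in> T" "i \<noteq> j"
        show "qua i \<inter> qua j = {}"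
        proof (rule ccontr)
          assume "qua i \<inter> qua j \<noteq> {}"
          then obtain c where c: "c \<in> B" "card c = 4" "i \<in> c" "j \<in> c" unfolding qua_def by blast
          obtain t where t: "t \<in> B" "card t = 3" "i \<in> t" "j \<in> t" using pairT[OF ij] by blast
          have "c = t" using dec_uniq[OF dec c(1) t(1) c(3) t(3) c(4) t(4) ij(3)] .
          thus False using c t by simp
        qed
      qed
    qed
    also have "\<dots> = 28" using r4 cT by simp
    finally have c28: "card (\<Union>x\<in>T. qua x) = 28" .
    have "(\<Union>x\<in>T. qua x) \<subseteq> {b\<in>B. card b = 4}" by (auto simp: qua_def)
    moreover have "finite {b\<in>B. card b = 4}" using fB by simp
    ultimately have "28 \<le> be" using c28 card_mono unfolding be_def num_K4_def by metis
    thus ?thesis using glob al7 by simp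
  qed
qed

end
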